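(* Let $L=L(m,n;k,l)$ be an $L$-shaped supergrid graph with distinct vertices $s,t$ such that $m-k=1$, $n-l=2$, $l=1$, $k\ge 2$, and $\{s,t\}=\{(1,2),(2,3)\}$ or $\{s,t\}=\{(1,3),(2,2)\}$. Then every simple path between $s$ and $t$ in $L$ has at most $mn-kl-1$ vertices.
   Context: The infinite supergrid graph has as vertices all points $(x,y)\in\mathbb{Z}^2$, two distinct vertices $u,v$ being adjacent iff $|u_x-v_x|\le 1$ and $|u_y-v_y|\le 1$. For integers $m,n>1$ and $k,l\ge 1$ with $m-k\ge 1$, $n-l\ge 1$, $L(m,n;k,l)$ is the subgraph induced by $\{(x,y):1\le x\le m,\ 1\le y\le n\}\setminus\{(x,y): m-k+1\le x\le m,\ 1\le y\le l\}$ (so it has $mn-kl$ vertices). *)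

theory Defs
  imports Main
begin

definition supergrid_adj :: "int \<times> int \<Rightarrow> int \<times> int \<Rightarrow> bool" where
  "supergrid_adj u v \<longleftrightarrow> u \<noteq> v \<and> \<bar>fst u - fst v\<bar> \<le> 1 \<and> \<bar>snd u - snd v\<bar> \<le> 1"

text \<open>Vertex set of the L-shaped supergrid graph L(m,n;k,l); its edges are those of
  the supergrid graph induced on this set.\<close>
definition L_vertices :: "nat \<Rightarrow> nat \<Rightarrow> nat \<Rightarrow> nat \<Rightarrow> (int \<times> int) set" where
  "L_vertices m n k l =
     {(x, y). 1 \<le> x \<and> x \<le> int m \<and> 1 \<le> y \<and> y \<le> int n}
     - {(x, y). int m - int k + 1 \<le> x \<and> x \<le> int m \<and> 1 \<le> y \<and> y \<le> int l}"

definition simple_path_in :: "(int \<times> int) set \<Rightarrow> (int \<times> int) list \<Rightarrow> bool" where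
  "simple_path_in V p \<longleftrightarrow> p \<noteq> [] \<and> distinct p \<and> set p \<subseteq> V \<and>
     (\<forall>i. Suc i < length p \<longrightarrow> supergrid_adj (p ! i) (p ! Suc i))"

end

theory Submission
  imports Defs
begin

lemma V_eq:
  assumes "m \<ge> 3"
  shows "L_vertices m 3 (m - Suc 0) (Suc 0) = insert (1,1) ({1..int m} \<times> {2,3})"
  using assms by (auto simp: L_vertices_def of_nat_diff)

lemma V_card:
  assumes "m \<ge> 3"
  shows "card (L_vertices m 3 (m-1) 1) = 2*m+1"
proof -
  have "card ({1..int m} \<times> {2::int,3}) = m * 2" by (simp add: card_cartesian_product)
  thus ?thesis using assms by (simp add: V_eq)
qed

lemma adj_sym: "supergrid_adj u v = supergrid_adj v u"
  unfolding supergrid_adj_def by auto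

lemma rev_path:
  assumes "simple_path_in V p" shows "simple_path_in V (rev p)"
  unfolding simple_path_in_def
proof (intro conjI allI impI)
  show "rev p \<noteq> []" "distinct (rev p)" "set (rev p) \<subseteq> V" using assms by (auto simp: simple_path_in_def)
  fix i assume i: "Suc i < length (rev p)"
  have a: "supergrid_adj (p ! (length p - Suc (Suc i))) (p ! Suc (length p - Suc (Suc i)))"
    using assms i by (simp add: simple_path_in_def)
  have e: "Suc (length p - Suc (Suc i)) = length p - Suc i" using i by simp
  show "supergrid_adj (rev p ! i) (rev p ! Suc i)"
    using a i by (simp add: rev_nth e adj_sym)
qed

lemma nb:
  assumes "w \<in> L_vertices m 3 (m-1) 1" "m \<ge> 3" "supergrid_adj v w"
  shows "v = (1,1) \<Longrightarrow> w \<in> {(1,2),(2,2)}"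
    and "v = (1,3) \<Longrightarrow> w \<in> {(1,2),(2,2),(2,3)}"
    and "v = (1,2) \<Longrightarrow> w \<in> {(1,1),(1,3),(2,2),(2,3)}"
proof -
  obtain a b where w: "w = (a,b)" by (cases w)
  have h: "(a = 1 \<and> b = 1) \<or> (1 \<le> a \<and> a \<le> int m \<and> 2 \<le> b \<and> b \<le> 3)"
    using assms(1,2) w by (auto simp: V_eq)
  show "v = (1,1) \<Longrightarrow> w \<in> {(1,2),(2,2)}"
    using h assms(3) w unfolding supergrid_adj_def by auto
  show "v = (1,3) \<Longrightarrow> w \<in> {(1,2),(2,2),(2,3)}"
    using h assms(3) w unfolding supergrid_adj_def by auto
  show "v = (1,2) \<Longrightarrow> w \<in> {(1,1),(1,3),(2,2),(2,3)}"
    using h assms(3) w unfolding supergrid_adj_def by auto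
qed

lemma core:
  assumes m: "m \<ge> 3" and P: "simple_path_in (L_vertices m 3 (m-1) 1) p"
    and S: "set p = L_vertices m 3 (m-1) 1"
    and L: "length p = 2*m+1"
    and st: "(p!0 = (1,2) \<and> p!(length p - 1) = (2,3)) \<or> (p!0 = (1,3) \<and> p!(length p - 1) = (2,2))"
  shows False
proof -
  define V where "V = L_vertices m 3 (m-1) 1"
  define N where "N = length p"
  have N7: "N \<ge> 7" using L m N_def by simp
  have dist: "distinct p" using P by (simp add: simple_path_in_def)
  have eq: "\<And>i j. i < N \<Longrightarrow> j < N \<Longrightarrow> p!i = p!j \<longleftrightarrow> i = j"
    using dist N_def by (simp add: nth_eq_iff_index_eq)
  have inV: "\<And>i. i < N \<Longrightarrow> p!i \<in> V" using S V_def N_def by auto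
  have adj: "\<And>i. Suc i < N \<Longrightarrow> supergrid_adj (p!i) (p!Suc i)"
    using P N_def by (simp add: simple_path_in_def)
  have idx: "\<And>v. v \<in> V \<Longrightarrow> \<exists>i<N. p!i = v" using S V_def N_def by (metis in_set_conv_nth)
  have mid: "\<And>i. 0 < i \<Longrightarrow> i < N - 1 \<Longrightarrow> supergrid_adj (p!i) (p!(i-1)) \<and> supergrid_adj (p!i) (p!(i+1)) \<and> p!(i-1) \<in> V \<and> p!(i+1) \<in> V"
  proof -
    fix i :: nat assume "0 < i" "i < N - 1"
    then show "supergrid_adj (p!i) (p!(i-1)) \<and> supergrid_adj (p!i) (p!(i+1)) \<and> p!(i-1) \<in> V \<and> p!(i+1) \<in> V"
      using adj[of "i-1"] adj[of i] inV[of "i-1"] inV[of "i+1"] by (simp add: adj_sym)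
  qed
  have v11: "(1,1) \<in> V" "(1,2) \<in> V" "(1,3) \<in> V" "(2,2) \<in> V" "(2,3) \<in> V"
    using m by (auto simp: V_def V_eq)
  have nbs: "\<And>i. 0 < i \<Longrightarrow> i < N - 1 \<Longrightarrow> p!i = (1,1) \<Longrightarrow> p!(i-1) \<in> {(1,2),(2,2)} \<and> p!(i+1) \<in> {(1,2),(2,2)}"
    "\<And>i. 0 < i \<Longrightarrow> i < N - 1 \<Longrightarrow> p!i = (1,3) \<Longrightarrow> p!(i-1) \<in> {(1,2),(2,2),(2,3)} \<and> p!(i+1) \<in> {(1,2),(2,2),(2,3)}"
    "\<And>i. 0 < i \<Longrightarrow> i < N - 1 \<Longrightarrow> p!i = (1,2) \<Longrightarrow> p!(i-1) \<in> {(1,1),(1,3),(2,2),(2,3)} \<and> p!(i+1) \<in> {(1,1),(1,3),(2,2),(2,3)}"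
    using mid nb[OF _ m] V_def by meson+
  have nb0: "p!0 = (1,3) \<Longrightarrow> p!1 \<in> {(1,2),(2,2),(2,3)}"
    using adj[of 0] inV[of 1] nb(2)[OF _ m] N7 V_def by simp
  obtain i where i: "i < N" "p!i = (1,1)" using idx v11 by blast
  have st': "(p!0 = (1,2) \<and> p!(N - 1) = (2,3)) \<or> (p!0 = (1,3) \<and> p!(N - 1) = (2,2))"
    using st N_def by simp
  have "i \<noteq> 0"
  proof
    assume "i = 0" hence "p!0 = (1,1)" using i by simp
    thus False using st' by auto
  qed
  moreover have "i \<noteq> N - 1" using i st' by auto
  ultimately have i0: "0 < i" "i < N - 1" using i by auto
  show False using st'
  proof
    assume A: "p!0 = (1,2) \<and> p!(N - 1) = (2,3)"
    have n1: "p!(i-1) \<in> {(1,2),(2,2)}" "p!(i+1) \<in> {(1,2),(2,2)}" using nbs(1)[OF i0 i(2)] by auto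
    have d1: "p!(i-1) \<noteq> p!(i+1)" using eq[of "i-1" "i+1"] i0 by simp
    have "p!(i+1) \<noteq> p!0" using eq[of "i+1" 0] i0 by simp
    hence "p!(i+1) = (2,2)" using n1 A by auto
    hence "p!(i-1) = (1,2)" using n1 d1 by auto
    hence "i - 1 = 0" using eq[of "i-1" 0] A i0 by simp
    hence i1: "i = 1" using i0 by simp
    have p2: "p!2 = (2,2)" using \<open>p!(i+1) = (2,2)\<close> i1 by (simp add: numeral_2_eq_2)
    obtain j where j: "j < N" "p!j = (1,3)" using idx v11 by blast
    have "j \<noteq> 0" using j A by (cases "j = 0") auto
    moreover have "j \<noteq> 1" using j i i1 by (cases "j = 1") auto
    moreover have "j \<noteq> 2" using j p2 by (cases "j = 2") auto
    moreover have "j \<noteq> N - 1" using j A by (cases "j = N - 1") auto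
    ultimately
    have j0: "0 < j" "j < N - 1" "j \<ge> 3" using j by auto
    have n2: "p!(j-1) \<in> {(1,2),(2,2),(2,3)}" "p!(j+1) \<in> {(1,2),(2,2),(2,3)}" using nbs(2)[OF j0(1,2) j(2)] by auto
    have "p!(j-1) \<noteq> p!0" using eq[of "j-1" 0] j0 by simp
    moreover have "p!(j-1) \<noteq> p!(N-1)" using eq[of "j-1" "N-1"] j0 by simp
    moreover have "p!(j+1) \<noteq> p!0" using eq[of "j+1" 0] j0 by simp
    moreover have "p!(j+1) \<noteq> p!2" using eq[of "j+1" 2] j0 by simp
    ultimately have "p!(j-1) = (2,2)" "p!(j+1) = (2,3)" using n2 A p2 by auto
    hence "j - 1 = 2" "j + 1 = N - 1" using eq[of "j-1" 2] eq[of "j+1" "N-1"] p2 A j0 N7 by auto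
    thus False using N7 by simp
  next
    assume B: "p!0 = (1,3) \<and> p!(N - 1) = (2,2)"
    have n1: "p!(i-1) \<in> {(1,2),(2,2)}" "p!(i+1) \<in> {(1,2),(2,2)}" using nbs(1)[OF i0 i(2)] by auto
    have d1: "p!(i-1) \<noteq> p!(i+1)" using eq[of "i-1" "i+1"] i0 by simp
    have "p!(i-1) \<noteq> p!(N-1)" using eq[of "i-1" "N-1"] i0 by simp
    hence a: "p!(i-1) = (1,2)" using n1 B by auto
    hence "p!(i+1) = (2,2)" using n1 d1 by auto
    hence "i + 1 = N - 1" using eq[of "i+1" "N-1"] B i0 by simp
    hence iN: "i = N - 2" using i0 by simp
    have "i - 1 = N - 3" using iN N7 by simp
    hence q: "p!(N-3) = (1,2)" using a by simp
    have p1n: "p!1 \<in> {(1,2),(2,2),(2,3)}" using nb0 B by simp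
    have "p!1 \<noteq> p!(N-3)" "p!1 \<noteq> p!(N-1)" using eq[of 1 "N-3"] eq[of 1 "N-1"] N7 by auto
    hence p1: "p!1 = (2,3)" using p1n q B by auto
    have k0: "0 < N - 3" "N - 3 < N - 1" using N7 by auto
    have n3: "p!(N-3-1) \<in> {(1,1),(1,3),(2,2),(2,3)}" using nbs(3)[OF k0 q] by auto
    have "p!(N-3-1) \<noteq> p!i" "p!(N-3-1) \<noteq> p!0" "p!(N-3-1) \<noteq> p!(N-1)" "p!(N-3-1) \<noteq> p!1"
      using eq[of "N-3-1" i] eq[of "N-3-1" 0] eq[of "N-3-1" "N-1"] eq[of "N-3-1" 1] N7 iN by auto
    thus False using n3 i B p1 by auto
  qed
qed

theorem lemma12:
  fixes m n k l :: nat and s t :: "int \<times> int" and p :: "(int \<times> int) list"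
  assumes "m > 1" "n > 1" "k \<ge> 1" "l \<ge> 1"
    and "m - k = 1" "n - l = 2" "l = 1" "k \<ge> 2"
    and "s \<in> L_vertices m n k l" "t \<in> L_vertices m n k l" "s \<noteq> t"
    and "{s, t} = {(1, 2), (2, 3)} \<or> {s, t} = {(1, 3), (2, 2)}"
    and "simple_path_in (L_vertices m n k l) p" "hd p = s" "last p = t"
  shows "length p \<le> m * n - k * l - 1"
proof (rule ccontr)
  assume c: "\<not> ?thesis"
  have n3: "n = 3" and l1: "l = 1" and km: "k = m - 1" and m3: "m \<ge> 3" using assms by auto
  have val: "m * n - k * l - 1 = 2 * m" using n3 l1 km m3 by (simp add: algebra_simps)
  let ?V = "L_vertices m 3 (m-1) 1"
  have P: "simple_path_in ?V p" using assms(13) n3 l1 km by simp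
  have fin: "finite ?V" using m3 by (simp add: V_eq)
  have "length p = card (set p)" using P by (simp add: simple_path_in_def distinct_card)
  moreover have "card (set p) \<le> card ?V" using P fin by (simp add: simple_path_in_def card_mono)
  ultimately have Lp: "length p = 2*m+1" using c val V_card[OF m3] by simp
  have S: "set p = ?V"
    using P fin Lp V_card[OF m3] \<open>length p = card (set p)\<close>
    by (metis card_subset_eq simple_path_in_def)
  have ne: "p \<noteq> []" using P by (simp add: simple_path_in_def)
  have hd: "p!0 = s" using ne assms(14) by (simp add: hd_conv_nth)
  have lt: "p!(length p - 1) = t" using ne assms(15) by (simp add: last_conv_nth)
  have rhd: "rev p ! 0 = t" using ne lt by (simp add: rev_nth)
  have rlt: "rev p ! (length (rev p) - 1) = s" using ne hd by (simp add: rev_nth)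
  have st: "(s = (1,2) \<and> t = (2,3)) \<or> (t = (1,2) \<and> s = (2,3)) \<or> (s = (1,3) \<and> t = (2,2)) \<or> (t = (1,3) \<and> s = (2,2))"
    using assms(11,12) by (auto simp: doubleton_eq_iff)
  then show False
  proof (elim disjE)
    assume "s = (1,2) \<and> t = (2,3)" thus False using core[OF m3 P S Lp] hd lt by blast
  next
    assume "t = (1,2) \<and> s = (2,3)" thus False using core[OF m3 rev_path[OF P]] S Lp rhd rlt by simp
  next
    assume "s = (1,3) \<and> t = (2,2)" thus False using core[OF m3 P S Lp] hd lt by blast
  next
    assume "t = (1,3) \<and> s = (2,2)" thus False using core[OF m3 rev_path[OF P]] S Lp rhd rlt by simp
  qed
qed

end
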